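(* Fix $s\in\mathbb{R}$ and a continuous $1$-periodic function $\tilde q$ with $\int_0^1\tilde q=0$. Suppose that for $\lambda$ in an open interval there are a real number $q_0(\lambda)$ and $1$-periodic $C^1$ functions $\tilde p(\lambda,\cdot)$ with $\int_0^1\tilde p(\lambda,x)\,dx=0$, depending differentiably on $\lambda$ (with $\partial_\lambda\tilde p$ and $\partial_\lambda\tilde p'$ continuous), such that \[ q_0(\lambda)=\lambda+\int_0^1\tilde p(\lambda,x)^2\,dx+s^2,\qquad \tilde q=\tilde p'+\tilde p^2-\int_0^1\tilde p^2+2s\tilde p \] (equivalently, $p=\tilde p+s$ is a periodic solution with $\int_0^1p=s$ of the Riccati equation $q_0+\tilde q=\lambda+p'+p^2$). Then $\frac{\partial q_0}{\partial\lambda}=1$; that is, the Jacobian of the transformation $(q_0,\tilde q,s)\mapsto(\lambda,\tilde q,s)$ is one. *)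

theory Defs
  imports "HOL-Analysis.Analysis"
begin

end

theory Submission imports Defs "HOL-Analysis.Analysis" begin

lemma antider:
  fixes Q :: "real \<Rightarrow> real"
  assumes "continuous_on UNIV Q"
  obtains F where "\<And>x. (F has_real_derivative Q x) (at x)"
proof -
  have "\<exists>F. \<forall>x :: real. (-\<infinity>::ereal) < x \<longrightarrow> x < (\<infinity>::ereal) \<longrightarrow> (F has_vector_derivative Q x) (at x)"
    by (rule einterval_antiderivative) (use assms continuous_on_eq_continuous_at in auto)
  then show ?thesis using that by (auto simp: has_real_derivative_iff_has_vector_derivative)
qed

lemma int_pos:
  fixes D :: "real \<Rightarrow> real"
  assumes "continuous_on {0..1} D" "\<And>x. x \<in> {0..1} \<Longrightarrow> D x > 0"
  shows "integral {0..1} D > 0"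
proof -
  obtain m where m: "m \<in> {0..1}" "\<And>x. x \<in> {0..1} \<Longrightarrow> D m \<le> D x"
    using continuous_attains_inf[of "{0..1::real}" D] assms(1) by fastforce
  have "D m \<le> integral {0..1} D"
    using integral_le[of "\<lambda>x. D m" "{0..1}" D] assms m integrable_continuous_real[OF assms(1)] by auto
  moreover have "D m > 0" using assms m by auto
  ultimately show ?thesis by simp
qed

lemma key:
  fixes D Q :: "real \<Rightarrow> real" and c :: real
  assumes der: "\<And>x. (D has_real_derivative (c - Q x * D x)) (at x)"
    and Qc: "continuous_on UNIV Q" and per: "D 1 = D 0"
    and mean: "integral {0..1} D = 0" and c: "c > 0"
  shows False
proof -
  obtain F where F: "\<And>x. (F has_real_derivative Q x) (at x)" using antider[OF Qc] by blast
  define G where "G x = exp (F x) * D x" for x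
  have Gd: "(G has_real_derivative c * exp (F x)) (at x)" for x
  proof -
    have "(G has_real_derivative exp (F x) * Q x * D x + exp (F x) * (c - Q x * D x)) (at x)"
      unfolding G_def by (auto intro!: derivative_eq_intros F der)
    then show ?thesis by (simp add: algebra_simps)
  qed
  have inc: "G x < G y" if "x < y" for x y
    by (rule DERIV_pos_imp_increasing[OF that]) (use Gd c in \<open>auto intro!: exI\<close>)
  have Dc: "continuous_on {0..1} D"
    using der by (meson DERIV_isCont continuous_at_imp_continuous_on)
  have G1: "G 1 = exp (F 1 - F 0) * G 0" using per by (simp add: G_def exp_diff)
  consider "G 0 > 0" | "G 0 < 0" | "G 0 = 0" by linarith
  then show False
  proof cases
    case 1
    have "D x > 0" if "x \<in> {0..1}" for x
    proof -
      have "G x \<ge> G 0" using inc[of 0 x] that by (cases "x = 0") auto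
      then have "G x > 0" using 1 by linarith
      then show ?thesis by (simp add: G_def zero_less_mult_iff)
    qed
    then show False using int_pos[OF Dc] mean by auto
  next
    case 2
    have "G 1 < 0" using G1 2 by (simp add: mult_pos_neg)
    have "D x < 0" if "x \<in> {0..1}" for x
    proof -
      have "G x \<le> G 1" using inc[of x 1] that by (cases "x = 1") auto
      then have "G x < 0" using \<open>G 1 < 0\<close> by linarith
      then show ?thesis by (simp add: G_def mult_less_0_iff)
    qed
    then have "integral {0..1} (\<lambda>x. - D x) > 0" using Dc
      by (intro int_pos) (auto intro: continuous_intros)
    then show False using mean by simp
  next
    case 3
    then show False using G1 inc[of 0 1] by simp
  qed
qed

lemma key0:
  fixes D Q :: "real \<Rightarrow> real" and c :: real
  assumes der: "\<And>x. (D has_real_derivative (c - Q x * D x)) (at x)"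
    and Qc: "continuous_on UNIV Q" and per: "D 1 = D 0"
    and mean: "integral {0..1} D = 0"
  shows "c = 0"
proof (rule ccontr)
  assume "c \<noteq> 0"
  then consider "c > 0" | "c < 0" by linarith
  then show False
  proof cases
    case 1 then show ?thesis using key[OF der Qc per mean] by blast
  next
    case 2
    have "((\<lambda>x. - D x) has_real_derivative (- c - Q x * (- D x))) (at x)" for x
      using DERIV_minus[OF der[of x]] by simp
    moreover have "integral {0..1} (\<lambda>x. - D x) = 0" using mean by simp
    ultimately show ?thesis using key[of "\<lambda>x. - D x" "-c" Q] Qc per 2 by auto
  qed
qed

lemma alg:
  fixes aa bb cc u v i1 i2 t :: real
  shows "aa = bb + u\<^sup>2 - i1 + 2 * t * u \<Longrightarrow> aa = cc + v\<^sup>2 - i2 + 2 * t * v \<Longrightarrow> bb - cc = i1 - i2 - (u + v + 2 * t) * (u - v)"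
  by (simp add: algebra_simps power2_eq_square)

theorem lemma1:
  fixes s a b :: real
    and qt :: "real \<Rightarrow> real"
    and q0 :: "real \<Rightarrow> real"
    and p dp pl dpl :: "real \<Rightarrow> real \<Rightarrow> real"
  assumes "a < b"
    and qt_cont: "continuous_on UNIV qt"
    and qt_per: "\<And>x. qt (x + 1) = qt x"
    and qt_mean: "integral {0..1} qt = 0"
    and p_per: "\<And>l x. l \<in> {a<..<b} \<Longrightarrow> p l (x + 1) = p l x"
    and p_deriv: "\<And>l x. l \<in> {a<..<b} \<Longrightarrow> (p l has_real_derivative dp l x) (at x)"
    and dp_cont: "\<And>l. l \<in> {a<..<b} \<Longrightarrow> continuous_on UNIV (dp l)"
    and p_mean: "\<And>l. l \<in> {a<..<b} \<Longrightarrow> integral {0..1} (p l) = 0"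
    and p_lderiv: "\<And>l x. l \<in> {a<..<b} \<Longrightarrow>
                   ((\<lambda>m. p m x) has_real_derivative pl l x) (at l)"
    and dp_lderiv: "\<And>l x. l \<in> {a<..<b} \<Longrightarrow>
                   ((\<lambda>m. dp m x) has_real_derivative dpl l x) (at l)"
    and pl_cont: "continuous_on ({a<..<b} \<times> UNIV) (\<lambda>(l, x). pl l x)"
    and dpl_cont: "continuous_on ({a<..<b} \<times> UNIV) (\<lambda>(l, x). dpl l x)"
    and q0_eq: "\<And>l. l \<in> {a<..<b} \<Longrightarrow>
                q0 l = l + integral {0..1} (\<lambda>x. (p l x)\<^sup>2) + s\<^sup>2"
    and riccati: "\<And>l x. l \<in> {a<..<b} \<Longrightarrow>
                qt x = dp l x + (p l x)\<^sup>2 - integral {0..1} (\<lambda>y. (p l y)\<^sup>2) + 2 * s * p l x"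
  shows "\<forall>l \<in> {a<..<b}. (q0 has_real_derivative 1) (at l)"
proof
  let ?I = "\<lambda>l. integral {0..1} (\<lambda>x. (p l x)\<^sup>2)"
  have pc: "continuous_on UNIV (p l)" if "l \<in> {a<..<b}" for l
    using p_deriv[OF that] by (meson DERIV_isCont continuous_at_imp_continuous_on)
  have const: "?I l1 = ?I l2" if l1: "l1 \<in> {a<..<b}" and l2: "l2 \<in> {a<..<b}" for l1 l2
  proof -
    have "?I l1 - ?I l2 = 0"
    proof (rule key0[of "\<lambda>x. p l1 x - p l2 x" "?I l1 - ?I l2" "\<lambda>x. p l1 x + p l2 x + 2 * s"])
      fix x
      have "((\<lambda>x. p l1 x - p l2 x) has_real_derivative dp l1 x - dp l2 x) (at x)"
        using p_deriv[OF l1] p_deriv[OF l2] by (intro DERIV_diff) auto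
      moreover have "dp l1 x - dp l2 x = ?I l1 - ?I l2 - (p l1 x + p l2 x + 2 * s) * (p l1 x - p l2 x)"
        using alg[OF riccati[OF l1, of x] riccati[OF l2, of x]] by simp
      ultimately show "((\<lambda>x. p l1 x - p l2 x) has_real_derivative ?I l1 - ?I l2 - (p l1 x + p l2 x + 2 * s) * (p l1 x - p l2 x)) (at x)"
        by simp
    next
      show "continuous_on UNIV (\<lambda>x. p l1 x + p l2 x + 2 * s)"
        using pc[OF l1] pc[OF l2] by (intro continuous_intros) auto
    next
      show "p l1 1 - p l2 1 = p l1 0 - p l2 0" using p_per[OF l1, of 0] p_per[OF l2, of 0] by simp
    next
      have "integral {0..1} (\<lambda>x. p l1 x - p l2 x) = integral {0..1} (p l1) - integral {0..1} (p l2)"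
        by (rule integral_diff; rule integrable_continuous_real; rule continuous_on_subset[OF pc]) (use l1 l2 in auto)
      then show "integral {0..1} (\<lambda>x. p l1 x - p l2 x) = 0" using p_mean[OF l1] p_mean[OF l2] by simp
    qed
    then show ?thesis by simp
  qed
  fix l assume l: "l \<in> {a<..<b}"
  have "((\<lambda>m. m + ?I l + s\<^sup>2) has_real_derivative 1) (at l)"
    by (auto intro!: derivative_eq_intros)
  then show "(q0 has_real_derivative 1) (at l)"
  proof (rule has_field_derivative_transform_within_open[OF _ _ l])
    show "open {a<..<b}" by simp
  next
    fix m assume "m \<in> {a<..<b}"
    then show "m + ?I l + s\<^sup>2 = q0 m" using q0_eq const[OF _ l] by simp
  qed
qed

end
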